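(* Let $\rho$ be a representation of $D^{2,2,2}$ and let $\{i,j,k\}=\{1,2,3\}$. With the notation of the context: 1. $\psi_i(x_i)=X^1_0$; 2. $\psi_i(x_j)=\psi_k(x_j)=\nu^0(y_iy_k)$; 3. $\psi_i(y_i)=\nu^0(x_i(y_j+y_k))$; 4. $\psi_i(y_j)=\nu^0(y_i(x_j+y_k))$; 5. $\psi_i(I)=\nu^0(y_i(y_j+y_k))$; 6. $\psi_i(y_jy_k)=\nu^0(y_i(x_j+x_k))$.
   Context: $D^{2,2,2}$ is the modular lattice generated by $x_1,y_1,x_2,y_2,x_3,y_3$ subject only to $x_i\subseteq y_i$ ($i=1,2,3$), with a greatest element $I$ adjoined. Meet is written $ab$, join $a+b$. A representation $\rho$ of $D^{2,2,2}$ in a finite-dimensional vector space $X_0$ is a lattice morphism from $D^{2,2,2}$ to the lattice of subspaces of $X_0$, with $\rho(I)=X_0$. Write $X_i=\rho(x_i)\subseteq Y_i=\rho(y_i)$. Put $R=Y_1\oplus Y_2\oplus Y_3$ (triples $(\eta_1,\eta_2,\eta_3)$ with $\eta_i\in Y_i$) and $X^1_0=\{(\eta_1,\eta_2,\eta_3)\in R:\sum\eta_i=0\}$. Define subspaces of $R$: - $G_i$: triples with $i$-th coordinate in $Y_i$ and other coordinates $0$; - $H_i$: triples with $i$-th coordinate in $X_i$ and other coordinates $0$; - $G'_i$: triples with $i$-th coordinate in $X_i$ and other coordinates arbitrary in the respective $Y$'s; - $H'_i$: triples with $i$-th coordinate $0$. The representation $\Phi^+\rho$ of $D^{2,2,2}$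 in $X^1_0$ is given by $\Phi^+\rho(y_i)=G'_i\cap X^1_0$, $\Phi^+\rho(x_i)=H'_i\cap X^1_0$ and $\Phi^+\rho(I)=X^1_0$. Set $\nu^1(a)=\Phi^+\rho(a)$, viewed as a subspace of $R$. $\nu^0$ is the representation of $D^{2,2,2}$ in $R$ with $\nu^0(y_i)=X^1_0+G_i$, $\nu^0(x_i)=X^1_0+H_i$, $\nu^0(I)=R$. The joint maps are defined by $\psi_i(a)=X^1_0+G_i\cap(H'_i+\nu^1(a))$ for $a\in D^{2,2,2}$. *)

theory Defs
  imports "HOL-Analysis.Analysis"
begin

definition ssum :: "'v::plus set \<Rightarrow> 'v set \<Rightarrow> 'v set" (infixl "\<oplus>\<^sub>s" 65) where
  "A \<oplus>\<^sub>s B = {a + b | a b. a \<in> A \<and> b \<in> B}"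

text \<open>Lattice terms over the generators x_1,y_1,x_2,y_2,x_3,y_3 and the adjoined top I
  of D^{2,2,2}. Every element of D^{2,2,2} is the class of such a term.\<close>
datatype lterm = Lx nat | Ly nat | LI | LMeet lterm lterm | LJoin lterm lterm

text \<open>Value of a lattice term under the (unique) lattice morphism into a subspace lattice
  determined by images gx i, gy i of x_i, y_i and image tp of I.\<close>
fun leval :: "(nat \<Rightarrow> 'v::plus set) \<Rightarrow> (nat \<Rightarrow> 'v set) \<Rightarrow> 'v set \<Rightarrow> lterm \<Rightarrow> 'v set" where
  "leval gx gy tp (Lx i) = gx i"
| "leval gx gy tp (Ly i) = gy i"
| "leval gx gy tp LI = tp"
| "leval gx gy tp (LMeet a b) = leval gx gy tp a \<inter> leval gx gy tp b"
| "leval gx gy tp (LJoin a b) = leval gx gy tp a \<oplus>\<^sub>s leval gx gy tp b"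

definition is_rep :: "(nat \<Rightarrow> ('a::field ^ 'n) set) \<Rightarrow> (nat \<Rightarrow> ('a ^ 'n) set) \<Rightarrow> bool" where
  "is_rep X Y \<longleftrightarrow> (\<forall>i\<in>{1,2,3}. vec.subspace (X i) \<and> vec.subspace (Y i) \<and> X i \<subseteq> Y i)"

type_synonym 'v triple = "'v \<times> 'v \<times> 'v"

fun coord :: "nat \<Rightarrow> 'v triple \<Rightarrow> 'v" where
  "coord i t = (if i = 1 then fst t else if i = 2 then fst (snd t) else snd (snd t))"

definition RR :: "(nat \<Rightarrow> 'v set) \<Rightarrow> 'v triple set" where
  "RR Y = {t. \<forall>i\<in>{1,2,3}. coord i t \<in> Y i}"

definition X10 :: "(nat \<Rightarrow> 'v::monoid_add set) \<Rightarrow> 'v triple set" where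
  "X10 Y = {t \<in> RR Y. coord 1 t + coord 2 t + coord 3 t = 0}"

definition GG :: "(nat \<Rightarrow> 'v::zero set) \<Rightarrow> nat \<Rightarrow> 'v triple set" where
  "GG Y i = {t \<in> RR Y. coord i t \<in> Y i \<and> (\<forall>l\<in>{1,2,3}. l \<noteq> i \<longrightarrow> coord l t = 0)}"

definition HH :: "(nat \<Rightarrow> 'v::zero set) \<Rightarrow> (nat \<Rightarrow> 'v set) \<Rightarrow> nat \<Rightarrow> 'v triple set" where
  "HH X Y i = {t \<in> RR Y. coord i t \<in> X i \<and> (\<forall>l\<in>{1,2,3}. l \<noteq> i \<longrightarrow> coord l t = 0)}"

definition GG' :: "(nat \<Rightarrow> 'v set) \<Rightarrow> (nat \<Rightarrow> 'v set) \<Rightarrow> nat \<Rightarrow> 'v triple set" where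
  "GG' X Y i = {t \<in> RR Y. coord i t \<in> X i}"

definition HH' :: "(nat \<Rightarrow> 'v::zero set) \<Rightarrow> nat \<Rightarrow> 'v triple set" where
  "HH' Y i = {t \<in> RR Y. coord i t = 0}"

text \<open>nu^1 = Phi^+ rho, viewed inside R.\<close>
definition nu1 :: "(nat \<Rightarrow> 'v::monoid_add set) \<Rightarrow> (nat \<Rightarrow> 'v set) \<Rightarrow> lterm \<Rightarrow> 'v triple set" where
  "nu1 X Y = leval (\<lambda>i. HH' Y i \<inter> X10 Y) (\<lambda>i. GG' X Y i \<inter> X10 Y) (X10 Y)"

definition nu0 :: "(nat \<Rightarrow> 'v::monoid_add set) \<Rightarrow> (nat \<Rightarrow> 'v set) \<Rightarrow> lterm \<Rightarrow> 'v triple set" where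
  "nu0 X Y = leval (\<lambda>i. X10 Y \<oplus>\<^sub>s HH X Y i) (\<lambda>i. X10 Y \<oplus>\<^sub>s GG Y i) (RR Y)"

definition psi :: "(nat \<Rightarrow> 'v::monoid_add set) \<Rightarrow> (nat \<Rightarrow> 'v set) \<Rightarrow> nat \<Rightarrow> lterm \<Rightarrow> 'v triple set" where
  "psi X Y i a = X10 Y \<oplus>\<^sub>s (GG Y i \<inter> (HH' Y i \<oplus>\<^sub>s nu1 X Y a))"

end

theory Submission
  imports Defs
begin

lemma ssumI: "a \<in> A \<Longrightarrow> b \<in> B \<Longrightarrow> t = a + b \<Longrightarrow> t \<in> A \<oplus>\<^sub>s B"
  unfolding ssum_def by blast

definition clo :: "'v::ab_group_add set \<Rightarrow> bool" where
  "clo S \<longleftrightarrow> 0 \<in> S \<and> (\<forall>x\<in>S. \<forall>y\<in>S. x + y \<in> S) \<and> (\<forall>x\<in>S. - x \<in> S)"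

definition sig :: "'v::ab_group_add triple \<Rightarrow> 'v" where
  "sig t = coord 1 t + coord 2 t + coord 3 t"

definition ei :: "nat \<Rightarrow> 'v::ab_group_add \<Rightarrow> 'v triple" where
  "ei i a = (if i = 1 then (a,0,0) else if i = 2 then (0,a,0) else (0,0,a))"

definition PP :: "(nat \<Rightarrow> 'v::ab_group_add set) \<Rightarrow> 'v set \<Rightarrow> 'v triple set" where
  "PP Y S = {t \<in> RR Y. sig t \<in> S}"

definition perm3 :: "nat \<Rightarrow> nat \<Rightarrow> nat \<Rightarrow> bool" where
  "perm3 i j k \<longleftrightarrow> {i, j, k} = {1, 2, 3} \<and> i \<noteq> j \<and> j \<noteq> k \<and> i \<noteq> k"

lemma perm3_cases:
  assumes "perm3 i j k"
  shows "(i=1\<and>j=2\<and>k=3) \<or> (i=1\<and>j=3\<and>k=2) \<or> (i=2\<and>j=1\<and>k=3) \<or> (i=2\<and>j=3\<and>k=1)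
        \<or> (i=3\<and>j=1\<and>k=2) \<or> (i=3\<and>j=2\<and>k=1)"
proof -
  have "i \<in> {1,2,3}" "j \<in> {1,2,3}" "k \<in> {1,2,3}" "i \<noteq> j" "j \<noteq> k" "i \<noteq> k"
    using assms unfolding perm3_def by blast+
  then show ?thesis by auto
qed

lemma coord_add[simp]: "coord l (s + t) = coord l s + coord l (t::'v::ab_group_add triple)"
  by simp
lemma coord_diff[simp]: "coord l (s - t) = coord l s - coord l (t::'v::ab_group_add triple)"
  by simp
lemma coord_ei[simp]: "i \<in> {1,2,3} \<Longrightarrow> l \<in> {1,2,3} \<Longrightarrow> coord l (ei i a) = (if l = i then a else 0)"
  by (auto simp: ei_def)

lemma coord_123[simp]: "coord 1 (a,b,c) = a" "coord 2 (a,b,c) = b" "coord 3 (a,b,c) = c" "coord (Suc 0) (a,b,c) = a"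
  by auto
lemma coord_0[simp]: "coord l 0 = 0" by simp

declare coord.simps[simp del]

lemma sig_add: "sig (s + t) = sig s + sig (t::'v::ab_group_add triple)"
  by (simp add: sig_def algebra_simps del: coord.simps)
lemma sig_diff: "sig (s - t) = sig s - sig (t::'v::ab_group_add triple)"
  by (simp add: sig_def algebra_simps del: coord.simps)
lemma sig_ei: "i \<in> {1,2,3} \<Longrightarrow> sig (ei i a) = (a::'v::ab_group_add)"
  by (auto simp: sig_def ei_def)

lemma sig_perm: "perm3 p q r \<Longrightarrow> sig t = coord p t + coord q t + coord r (t::'v::ab_group_add triple)"
  apply (drule perm3_cases) by (auto simp: sig_def algebra_simps coord.simps)

lemma RR_perm: "perm3 p q r \<Longrightarrow> t \<in> RR Y \<longleftrightarrow> coord p t \<in> Y p \<and> coord q t \<in> Y q \<and> coord r t \<in> Y r"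
  apply (drule perm3_cases) unfolding RR_def by (auto simp: coord.simps)

lemma tri: "perm3 p q r \<Longrightarrow> \<exists>t. coord p t = a \<and> coord q t = b \<and> coord r t = c"
  apply (drule perm3_cases)
  apply (elim disjE)
  apply (rule exI[of _ "(a,b,c)"], simp)
  apply (rule exI[of _ "(a,c,b)"], simp)
  apply (rule exI[of _ "(b,a,c)"], simp)
  apply (rule exI[of _ "(c,a,b)"], simp)
  apply (rule exI[of _ "(b,c,a)"], simp)
  apply (rule exI[of _ "(c,b,a)"], simp)
  done

lemma X10_eq: "X10 (Y::nat \<Rightarrow> 'v::ab_group_add set) = {t \<in> RR Y. sig t = 0}"
  unfolding X10_def sig_def by blast
lemma PP_Int: "PP Y A \<inter> PP Y B = PP Y (A \<inter> (B::'v::ab_group_add set))"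
  unfolding PP_def by auto

context
  fixes X Y :: "nat \<Rightarrow> 'v::ab_group_add set"
  assumes cl: "\<And>l. l \<in> {1,2,3} \<Longrightarrow> clo (X l) \<and> clo (Y l) \<and> X l \<subseteq> Y l"
begin

lemma Y0: "l \<in> {1,2,3} \<Longrightarrow> 0 \<in> Y l" using cl unfolding clo_def by blast
lemma Yadd: "l \<in> {1,2,3} \<Longrightarrow> a \<in> Y l \<Longrightarrow> b \<in> Y l \<Longrightarrow> a + b \<in> Y l" using cl unfolding clo_def by blast
lemma Yneg: "l \<in> {1,2,3} \<Longrightarrow> a \<in> Y l \<Longrightarrow> - a \<in> Y l" using cl unfolding clo_def by blast
lemma Ydiff: "l \<in> {1,2,3} \<Longrightarrow> a \<in> Y l \<Longrightarrow> b \<in> Y l \<Longrightarrow> a - b \<in> Y l"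
  using Yadd[of l a "-b"] Yneg[of l b] by simp

lemma RR_add: "s \<in> RR Y \<Longrightarrow> t \<in> RR Y \<Longrightarrow> s + t \<in> RR Y"
  unfolding RR_def using Yadd by (simp del: coord.simps)
lemma RR_diff: "s \<in> RR Y \<Longrightarrow> t \<in> RR Y \<Longrightarrow> s - t \<in> RR Y"
  unfolding RR_def using Ydiff by (simp del: coord.simps)
lemma ei_RR: "i \<in> {1,2,3} \<Longrightarrow> a \<in> Y i \<Longrightarrow> ei i a \<in> RR Y"
  unfolding RR_def using Y0 by (auto simp: coord.simps ei_def)

lemma RR_coord: "t \<in> RR Y \<Longrightarrow> l \<in> {1,2,3} \<Longrightarrow> coord l t \<in> Y l"
  unfolding RR_def by blast


lemma psi_char:
  assumes i: "i \<in> {1,2,3}" and V: "V \<subseteq> X10 Y"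
  shows "X10 Y \<oplus>\<^sub>s (GG Y i \<inter> (HH' Y i \<oplus>\<^sub>s V)) = PP Y (coord i ` V)"
proof (rule set_eqI, rule iffI)
  fix t assume "t \<in> X10 Y \<oplus>\<^sub>s (GG Y i \<inter> (HH' Y i \<oplus>\<^sub>s V))"
  then obtain x g h v where x: "x \<in> X10 Y" and g: "g \<in> GG Y i" and h: "h \<in> HH' Y i" and v: "v \<in> V"
    and t: "t = x + g" and gh: "g = h + v"
    unfolding ssum_def by blast
  have "sig g = coord i g"
    using g i unfolding GG_def sig_def by (auto simp: coord.simps)
  moreover have "coord i g = coord i v" using h gh unfolding HH'_def by auto
  moreover have "sig x = 0" using x X10_eq[of Y] by auto
  ultimately have "sig t = coord i v" using t sig_add[of x g] by (simp del: coord.simps)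
  moreover have "t \<in> RR Y" using x g t RR_add unfolding X10_def GG_def by auto
  ultimately show "t \<in> PP Y (coord i ` V)" using v unfolding PP_def by auto
next
  fix t assume "t \<in> PP Y (coord i ` V)"
  then obtain v where t: "t \<in> RR Y" and v: "v \<in> V" and s: "sig t = coord i v"
    unfolding PP_def by auto
  have vR: "v \<in> RR Y" and "sig v = 0" using v V X10_eq[of Y] by auto
  have ci: "coord i v \<in> Y i" using vR i unfolding RR_def by auto
  define g where "g = ei i (coord i v)"
  have gR: "g \<in> RR Y" using ei_RR ci i g_def by auto
  have gG: "g \<in> GG Y i" using gR i ci unfolding GG_def g_def by auto
  have hH: "g - v \<in> HH' Y i" using RR_diff[OF gR vR] i unfolding HH'_def g_def by auto
  have gH: "g \<in> HH' Y i \<oplus>\<^sub>s V" unfolding ssum_def using hH v by (intro CollectI exI[of _ "g - v"] exI[of _ v]) auto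
  have "sig (t - g) = 0" using s by (simp add: sig_diff g_def sig_ei[OF i] del: coord.simps)
  then have tg: "t - g \<in> X10 Y" using RR_diff[OF t gR] X10_eq[of Y] by simp
  have "t = (t - g) + g" by simp
  then show "t \<in> X10 Y \<oplus>\<^sub>s (GG Y i \<inter> (HH' Y i \<oplus>\<^sub>s V))"
    using gG gH tg by (blast intro: ssumI)
qed

lemma nu0_atom:
  assumes i: "i \<in> {1,2,3}" and S: "S \<subseteq> Y i"
  shows "X10 Y \<oplus>\<^sub>s {t \<in> RR Y. coord i t \<in> S \<and> (\<forall>l\<in>{1,2,3}. l \<noteq> i \<longrightarrow> coord l t = 0)} = PP Y S"
proof (rule set_eqI, rule iffI)
  fix t assume "t \<in> X10 Y \<oplus>\<^sub>s {t \<in> RR Y. coord i t \<in> S \<and> (\<forall>l\<in>{1,2,3}. l \<noteq> i \<longrightarrow> coord l t = 0)}"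
  then obtain x g where x: "x \<in> X10 Y" and g: "g \<in> RR Y" "coord i g \<in> S" "\<forall>l\<in>{1,2,3}. l \<noteq> i \<longrightarrow> coord l g = 0"
    and t: "t = x + g" unfolding ssum_def by blast
  have "sig g = coord i g" using g i unfolding sig_def by (auto simp: coord.simps)
  then have "sig t = coord i g" using x t sig_add[of x g] X10_eq[of Y] by auto
  then show "t \<in> PP Y S" using g x t RR_add X10_eq[of Y] unfolding PP_def by auto
next
  fix t assume "t \<in> PP Y S"
  then have t: "t \<in> RR Y" "sig t \<in> S" unfolding PP_def by auto
  define g where "g = ei i (sig t)"
  have gR: "g \<in> RR Y" using ei_RR t S i g_def by auto
  have "sig (t - g) = 0" by (simp add: sig_diff g_def sig_ei[OF i] del: coord.simps)
  then have "t - g \<in> X10 Y" using RR_diff[OF t(1) gR] X10_eq[of Y] by simp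
  moreover have "g \<in> {t \<in> RR Y. coord i t \<in> S \<and> (\<forall>l\<in>{1,2,3}. l \<noteq> i \<longrightarrow> coord l t = 0)}"
    using gR t i unfolding g_def by auto
  ultimately show "t \<in> X10 Y \<oplus>\<^sub>s {t \<in> RR Y. coord i t \<in> S \<and> (\<forall>l\<in>{1,2,3}. l \<noteq> i \<longrightarrow> coord l t = 0)}"
    unfolding ssum_def by (intro CollectI exI[of _ "t - g"] exI[of _ g]) auto
qed

lemma nu0_y: "i \<in> {1,2,3} \<Longrightarrow> X10 Y \<oplus>\<^sub>s GG Y i = PP Y (Y i)"
  using nu0_atom[of i "Y i"] unfolding GG_def by auto

lemma nu0_x: "i \<in> {1,2,3} \<Longrightarrow> X10 Y \<oplus>\<^sub>s HH X Y i = PP Y (X i)"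
  using nu0_atom[of i "X i"] cl unfolding HH_def by auto


lemma PP_sum:
  assumes A: "A \<subseteq> sig ` RR Y" and B: "B \<subseteq> sig ` RR Y"
  shows "PP Y A \<oplus>\<^sub>s PP Y B = PP Y (A \<oplus>\<^sub>s B)"
proof (rule set_eqI, rule iffI)
  fix t assume "t \<in> PP Y A \<oplus>\<^sub>s PP Y B"
  then obtain a b where ab: "a \<in> PP Y A" "b \<in> PP Y B" and t: "t = a + b" unfolding ssum_def by blast
  have "sig t = sig a + sig b" using t sig_add[of a b] by simp
  moreover have "t \<in> RR Y" using ab t RR_add unfolding PP_def by blast
  ultimately show "t \<in> PP Y (A \<oplus>\<^sub>s B)" using ab unfolding PP_def ssum_def by blast
next
  fix t assume "t \<in> PP Y (A \<oplus>\<^sub>s B)"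
  then obtain a b where t: "t \<in> RR Y" "sig t = a + b" and a: "a \<in> A" and b: "b \<in> B"
    unfolding PP_def ssum_def by blast
  obtain s where s: "s \<in> RR Y" "sig s = a" using a A by blast
  have "s \<in> PP Y A" using s a unfolding PP_def by auto
  moreover have "t - s \<in> PP Y B" using RR_diff[OF t(1) s(1)] sig_diff[of t s] s t b unfolding PP_def by auto
  ultimately show "t \<in> PP Y A \<oplus>\<^sub>s PP Y B" unfolding ssum_def
    by (intro CollectI exI[of _ s] exI[of _ "t - s"]) auto
qed

lemma Y_sig: "l \<in> {1,2,3} \<Longrightarrow> Y l \<subseteq> sig ` RR Y"
proof
  fix a assume "l \<in> {1,2,3}" "a \<in> Y l"
  then have "ei l a \<in> RR Y" "sig (ei l a) = a" using ei_RR sig_ei by auto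
  then show "a \<in> sig ` RR Y" by (intro image_eqI[of _ _ "ei l a"]) auto
qed

lemma X_sig: "l \<in> {1,2,3} \<Longrightarrow> X l \<subseteq> sig ` RR Y"
  using Y_sig cl by blast

lemma sum_sig: "A \<subseteq> sig ` RR Y \<Longrightarrow> B \<subseteq> sig ` RR Y \<Longrightarrow> A \<oplus>\<^sub>s B \<subseteq> sig ` RR Y"
proof
  fix x assume A: "A \<subseteq> sig ` RR Y" and B: "B \<subseteq> sig ` RR Y" and x: "x \<in> A \<oplus>\<^sub>s B"
  then obtain a b where "a \<in> A" "b \<in> B" "x = a + b" unfolding ssum_def by blast
  then obtain s u where su: "s \<in> RR Y" "u \<in> RR Y" "sig s = a" "sig u = b" using A B by blast
  then have "sig (s + u) = x" using \<open>x = a + b\<close> sig_add[of s u] by simp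
  moreover have "s + u \<in> RR Y" using su RR_add by blast
  ultimately show "x \<in> sig ` RR Y" by (intro image_eqI[of _ _ "s + u"]) auto
qed

lemma proj:
  assumes p: "perm3 p q r" and A: "A \<subseteq> Y q" "\<And>x. x \<in> A \<Longrightarrow> - x \<in> A"
    and B: "B \<subseteq> Y r" "\<And>x. x \<in> B \<Longrightarrow> - x \<in> B"
  shows "coord p ` {t \<in> RR Y. sig t = 0 \<and> coord q t \<in> A \<and> coord r t \<in> B} = Y p \<inter> (A \<oplus>\<^sub>s B)"
proof (rule set_eqI, rule iffI)
  fix a assume "a \<in> coord p ` {t \<in> RR Y. sig t = 0 \<and> coord q t \<in> A \<and> coord r t \<in> B}"
  then obtain t where t: "t \<in> RR Y" "sig t = 0" "coord q t \<in> A" "coord r t \<in> B" and a: "a = coord p t"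
    by (auto simp del: coord.simps)
  have "coord p t + (coord q t + coord r t) = 0" using t(2) sig_perm[OF p, of t] by (simp add: add.assoc)
  then have "coord p t = - (coord q t + coord r t)" by (rule eq_neg_iff_add_eq_0[THEN iffD2])
  then have "a = (- coord q t) + (- coord r t)" using a by (simp only: minus_add_distrib)
  then have "a \<in> A \<oplus>\<^sub>s B" using ssumI[of "- coord q t" A "- coord r t" B a] t(3,4) A(2) B(2) by blast
  moreover have "a \<in> Y p" using RR_perm[OF p, of t Y] t a by blast
  ultimately show "a \<in> Y p \<inter> (A \<oplus>\<^sub>s B)" by auto
next
  fix a assume "a \<in> Y p \<inter> (A \<oplus>\<^sub>s B)"
  then obtain b c where a: "a \<in> Y p" and b: "b \<in> A" and c: "c \<in> B" and abc: "a = b + c"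
    unfolding ssum_def by blast
  obtain t where t: "coord p t = a" "coord q t = - b" "coord r t = - c" using tri[OF p, of a "- b" "- c"] by blast
  have nb: "- b \<in> Y q" "- b \<in> A" using A b by blast+
  have nc: "- c \<in> Y r" "- c \<in> B" using B c by blast+
  have tR: "t \<in> RR Y" using RR_perm[OF p, of t Y] t a nb nc by simp
  have "sig t = a + - b + - c" using sig_perm[OF p, of t] t by simp
  then have ts: "sig t = 0" using abc by (simp add: algebra_simps)
  have "t \<in> {t \<in> RR Y. sig t = 0 \<and> coord q t \<in> A \<and> coord r t \<in> B}"
    using tR ts t nb nc by simp
  then show "a \<in> coord p ` {t \<in> RR Y. sig t = 0 \<and> coord q t \<in> A \<and> coord r t \<in> B}"
    using t(1) by (intro image_eqI[of _ _ t]) auto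
qed

end

lemma mem_nu1_Lx: "t \<in> nu1 X Y (Lx l) \<longleftrightarrow> t \<in> RR Y \<and> sig t = 0 \<and> coord l t = (0::'v::ab_group_add)"
  unfolding nu1_def HH'_def X10_eq by auto

lemma mem_nu1_Ly: "t \<in> nu1 X Y (Ly l) \<longleftrightarrow> t \<in> RR Y \<and> sig t = 0 \<and> coord l t \<in> (X l::'v::ab_group_add set)"
  unfolding nu1_def GG'_def X10_eq by auto

lemma nu1_meet: "nu1 X Y (LMeet a b) = nu1 X Y a \<inter> (nu1 X Y b :: 'v::ab_group_add triple set)"
  unfolding nu1_def by simp

lemma img_filter: "f ` {t \<in> S. f t \<in> C} = C \<inter> f ` S"
  by auto

lemma zero_sum: "0 \<in> S \<Longrightarrow> {0::'v::monoid_add} \<oplus>\<^sub>s S = S"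
  unfolding ssum_def by force

lemma clo_sub: "vec.subspace (S :: ('a::field ^ 'n) set) \<Longrightarrow> clo S"
  unfolding clo_def using vec.subspace_0 vec.subspace_add vec.subspace_neg by blast

theorem mainTheorem2:
  fixes X Y :: "nat \<Rightarrow> ('a::field ^ 'n) set" and i j k :: nat
  assumes "is_rep X Y"
    and "{i, j, k} = {1, 2, 3}" and "i \<noteq> j" and "j \<noteq> k" and "i \<noteq> k"
  shows "psi X Y i (Lx i) = X10 Y
    \<and> psi X Y i (Lx j) = nu0 X Y (LMeet (Ly i) (Ly k))
    \<and> psi X Y k (Lx j) = nu0 X Y (LMeet (Ly i) (Ly k))
    \<and> psi X Y i (Ly i) = nu0 X Y (LMeet (Lx i) (LJoin (Ly j) (Ly k)))
    \<and> psi X Y i (Ly j) = nu0 X Y (LMeet (Ly i) (LJoin (Lx j) (Ly k)))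
    \<and> psi X Y i LI = nu0 X Y (LMeet (Ly i) (LJoin (Ly j) (Ly k)))
    \<and> psi X Y i (LMeet (Ly j) (Ly k)) = nu0 X Y (LMeet (Ly i) (LJoin (Lx j) (Lx k)))"
proof -
  have cl: "\<And>l. l \<in> {1,2,3} \<Longrightarrow> clo (X l) \<and> clo (Y l) \<and> X l \<subseteq> Y l"
    using assms(1) clo_sub unfolding is_rep_def by blast
  have p: "perm3 i j k" using assms unfolding perm3_def by blast
  have "{k, j, i} = {i, j, k}" by blast
  then have p2: "perm3 k j i" using assms unfolding perm3_def by simp
  have i3: "i \<in> {1,2,3}" using assms(2) insertI1 by metis
  have j3: "j \<in> {1,2,3}" using assms(2) by blast
  have k3: "k \<in> {1,2,3}" using assms(2) by blast
  have X0: "\<And>l. l \<in> {1,2,3} \<Longrightarrow> 0 \<in> X l" and Xn: "\<And>l x. l \<in> {1,2,3} \<Longrightarrow> x \<in> X l \<Longrightarrow> - x \<in> X l"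
    and XY: "\<And>l. l \<in> {1,2,3} \<Longrightarrow> X l \<subseteq> Y l"
    using cl unfolding clo_def by blast+
  have Y0: "\<And>l. l \<in> {1,2,3} \<Longrightarrow> 0 \<in> Y l" and Yn: "\<And>l x. l \<in> {1,2,3} \<Longrightarrow> x \<in> Y l \<Longrightarrow> - x \<in> Y l"
    using cl unfolding clo_def by blast+
  have RRc: "\<And>t l. t \<in> RR Y \<Longrightarrow> l \<in> {1,2,3} \<Longrightarrow> coord l t \<in> Y l"
    unfolding RR_def by blast
  note X10e = X10_eq[of Y]
  have psiV: "\<And>l a. l \<in> {1,2,3} \<Longrightarrow> nu1 X Y a \<subseteq> X10 Y \<Longrightarrow> psi X Y l a = PP Y (coord l ` nu1 X Y a)"
    unfolding psi_def using psi_char[where X=X and Y=Y, OF cl] by blast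
  have prA: "\<And>A B. A \<subseteq> Y j \<Longrightarrow> (\<And>x. x \<in> A \<Longrightarrow> - x \<in> A) \<Longrightarrow> B \<subseteq> Y k \<Longrightarrow> (\<And>x. x \<in> B \<Longrightarrow> - x \<in> B) \<Longrightarrow>
     coord i ` {t \<in> RR Y. sig t = 0 \<and> coord j t \<in> A \<and> coord k t \<in> B} = Y i \<inter> (A \<oplus>\<^sub>s B)"
    using proj[where X=X and Y=Y, OF cl p] by blast
  have full: "X10 Y = {t \<in> RR Y. sig t = 0 \<and> coord j t \<in> Y j \<and> coord k t \<in> Y k}"
  proof (intro set_eqI iffI)
    fix t assume "t \<in> X10 Y"
    then have "t \<in> RR Y" "sig t = 0" unfolding X10e by auto
    then show "t \<in> {t \<in> RR Y. sig t = 0 \<and> coord j t \<in> Y j \<and> coord k t \<in> Y k}"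
      using RRc[OF _ j3, of t] RRc[OF _ k3, of t] by blast
  next
    fix t assume "t \<in> {t \<in> RR Y. sig t = 0 \<and> coord j t \<in> Y j \<and> coord k t \<in> Y k}"
    then show "t \<in> X10 Y" unfolding X10e by blast
  qed
  have projfull: "coord i ` X10 Y = Y i \<inter> (Y j \<oplus>\<^sub>s Y k)"
    unfolding full using prA[of "Y j" "Y k"] Yn j3 k3 by blast
  have n0y: "\<And>l. l \<in> {1,2,3} \<Longrightarrow> X10 Y \<oplus>\<^sub>s GG Y l = PP Y (Y l)"
    using nu0_y[where X=X and Y=Y, OF cl] by blast
  have n0x: "\<And>l. l \<in> {1,2,3} \<Longrightarrow> X10 Y \<oplus>\<^sub>s HH X Y l = PP Y (X l)"
    using nu0_x[where X=X and Y=Y, OF cl] by blast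
  have PPs: "\<And>A B. A \<subseteq> sig ` RR Y \<Longrightarrow> B \<subseteq> sig ` RR Y \<Longrightarrow> PP Y A \<oplus>\<^sub>s PP Y B = PP Y (A \<oplus>\<^sub>s B)"
    using PP_sum[where X=X and Y=Y, OF cl] by blast
  have Ys: "\<And>l. l \<in> {1,2,3} \<Longrightarrow> Y l \<subseteq> sig ` RR Y" using Y_sig[where X=X and Y=Y, OF cl] by blast
  have Xs: "\<And>l. l \<in> {1,2,3} \<Longrightarrow> X l \<subseteq> sig ` RR Y" using X_sig[where X=X and Y=Y, OF cl] by blast
  note n0 = n0y[OF i3] n0y[OF j3] n0y[OF k3] n0x[OF i3] n0x[OF j3] n0x[OF k3]
  note PPi = PPs[OF Ys[OF j3] Ys[OF k3]] PPs[OF Xs[OF j3] Ys[OF k3]] PPs[OF Xs[OF j3] Xs[OF k3]]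
  note PPI = PP_Int[of Y]
  have sumY: "0 \<in> Y j \<oplus>\<^sub>s Y k" using ssumI[of 0 "Y j" 0 "Y k" 0] Y0[OF j3] Y0[OF k3] by simp

  have e1: "psi X Y i (Lx i) = X10 Y"
  proof -
    have N: "nu1 X Y (Lx i) = {t \<in> X10 Y. coord i t \<in> {0}}"
      by (rule set_eqI) (simp add: mem_nu1_Lx X10e)
    have "coord i ` nu1 X Y (Lx i) = {0}"
      unfolding N img_filter projfull using sumY Y0[OF i3] by blast
    moreover have "nu1 X Y (Lx i) \<subseteq> X10 Y" unfolding N by blast
    ultimately have "psi X Y i (Lx i) = PP Y {0}" using psiV[OF i3, of "Lx i"] by simp
    also have "\<dots> = X10 Y" unfolding PP_def X10e by simp
    finally show ?thesis .
  qed
  have e2: "psi X Y i (Lx j) = nu0 X Y (LMeet (Ly i) (Ly k))"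
  proof -
    have N: "nu1 X Y (Lx j) = {t \<in> RR Y. sig t = 0 \<and> coord j t \<in> {0} \<and> coord k t \<in> Y k}"
      by (rule set_eqI) (simp add: mem_nu1_Lx; blast intro: RRc[OF _ k3])
    have "coord i ` nu1 X Y (Lx j) = Y i \<inter> (({0}::('a^'n) set) \<oplus>\<^sub>s Y k)"
      unfolding N by (rule prA) (use Y0[OF j3] Yn[OF k3] in auto)
    then have "coord i ` nu1 X Y (Lx j) = Y i \<inter> Y k"
      using zero_sum[of "Y k"] Y0[OF k3] by simp
    moreover have "nu1 X Y (Lx j) \<subseteq> X10 Y" unfolding N X10e by blast
    ultimately show ?thesis using psiV[OF i3, of "Lx j"]
      by (simp add: nu0_def n0 PPi PPI)
  qed
  have e3: "psi X Y k (Lx j) = nu0 X Y (LMeet (Ly i) (Ly k))"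
  proof -
    have N: "nu1 X Y (Lx j) = {t \<in> RR Y. sig t = 0 \<and> coord j t \<in> {0} \<and> coord i t \<in> Y i}"
      by (rule set_eqI) (simp add: mem_nu1_Lx; blast intro: RRc[OF _ i3])
    have "coord k ` nu1 X Y (Lx j) = Y k \<inter> (({0}::('a^'n) set) \<oplus>\<^sub>s Y i)"
      unfolding N by (rule proj[where X=X and Y=Y, OF cl p2]) (use Y0[OF j3] Yn[OF i3] in auto)
    then have "coord k ` nu1 X Y (Lx j) = Y i \<inter> Y k"
      using zero_sum[of "Y i"] Y0[OF i3] by (simp add: Int_commute)
    moreover have "nu1 X Y (Lx j) \<subseteq> X10 Y" unfolding N X10e by blast
    ultimately show ?thesis using psiV[OF k3, of "Lx j"]
      by (simp add: nu0_def n0 PPi PPI)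
  qed
  have e4: "psi X Y i (Ly i) = nu0 X Y (LMeet (Lx i) (LJoin (Ly j) (Ly k)))"
  proof -
    have N: "nu1 X Y (Ly i) = {t \<in> X10 Y. coord i t \<in> X i}"
      by (rule set_eqI) (simp add: mem_nu1_Ly X10e)
    have "coord i ` nu1 X Y (Ly i) = X i \<inter> (Y j \<oplus>\<^sub>s Y k)"
      unfolding N img_filter projfull using XY[OF i3] by blast
    moreover have "nu1 X Y (Ly i) \<subseteq> X10 Y" unfolding N by blast
    ultimately show ?thesis using psiV[OF i3, of "Ly i"]
      by (simp add: nu0_def n0 PPi PPI)
  qed
  have e5: "psi X Y i (Ly j) = nu0 X Y (LMeet (Ly i) (LJoin (Lx j) (Ly k)))"
  proof -
    have N: "nu1 X Y (Ly j) = {t \<in> RR Y. sig t = 0 \<and> coord j t \<in> X j \<and> coord k t \<in> Y k}"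
      by (rule set_eqI) (simp add: mem_nu1_Ly; blast intro: RRc[OF _ k3])
    have "coord i ` nu1 X Y (Ly j) = Y i \<inter> (X j \<oplus>\<^sub>s Y k)"
      unfolding N by (rule prA) (use XY[OF j3] Xn[OF j3] Yn[OF k3] in auto)
    moreover have "nu1 X Y (Ly j) \<subseteq> X10 Y" unfolding N X10e by blast
    ultimately show ?thesis using psiV[OF i3, of "Ly j"]
      by (simp add: nu0_def n0 PPi PPI)
  qed
  have e6: "psi X Y i LI = nu0 X Y (LMeet (Ly i) (LJoin (Ly j) (Ly k)))"
  proof -
    have N: "nu1 X Y LI = X10 Y"
      unfolding nu1_def by simp
    have "coord i ` nu1 X Y LI = Y i \<inter> (Y j \<oplus>\<^sub>s Y k)"
      unfolding N projfull ..
    then show ?thesis using psiV[OF i3, of LI] N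
      by (simp add: nu0_def n0 PPi PPI)
  qed
  have e7: "psi X Y i (LMeet (Ly j) (Ly k)) = nu0 X Y (LMeet (Ly i) (LJoin (Lx j) (Lx k)))"
  proof -
    have N: "nu1 X Y (LMeet (Ly j) (Ly k)) = {t \<in> RR Y. sig t = 0 \<and> coord j t \<in> X j \<and> coord k t \<in> X k}"
      by (rule set_eqI) (simp add: mem_nu1_Ly nu1_meet; blast)
    have "coord i ` nu1 X Y (LMeet (Ly j) (Ly k)) = Y i \<inter> (X j \<oplus>\<^sub>s X k)"
      unfolding N by (rule prA) (use XY[OF j3] XY[OF k3] Xn[OF j3] Xn[OF k3] in auto)
    moreover have "nu1 X Y (LMeet (Ly j) (Ly k)) \<subseteq> X10 Y" unfolding N X10e by blast
    ultimately show ?thesis using psiV[OF i3, of "LMeet (Ly j) (Ly k)"]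
      by (simp add: nu0_def n0 PPi PPI)
  qed
  show ?thesis using e1 e2 e3 e4 e5 e6 e7 by blast
qed

end
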